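(* Let $X$ be a $T_1$ topological space. An element $f\in T''(X)$ is a unit of the ring $T''(X)$ if and only if $Z(f)=\{x\in X: f(x)=0\}=\emptyset$.
   Context: $C(X)$ is the ring of real-valued continuous functions on $X$; a cozero set is a set $\{x: g(x)\neq 0\}$ with $g\in C(X)$. $T''(X)$ is the ring (under pointwise operations) of all functions $f\colon X\to\mathbb{R}$ for which there is a dense cozero set $U$ of $X$ with $f|_U$ continuous. *)

theory Defs
  imports "HOL-Analysis.Analysis"
begin

text \<open>The space X is the whole type 'a, a T1 space (type class t1_space).\<close>

definition cozero_set :: "('a::topological_space \<Rightarrow> real) \<Rightarrow> 'a set" where
  "cozero_set g = {x. g x \<noteq> 0}"

definition is_cozero :: "'a::topological_space set \<Rightarrow> bool" where
  "is_cozero U \<longleftrightarrow> (\<exists>g::'a \<Rightarrow> real. continuous_on UNIV g \<and> U = cozero_set g)"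

definition Tpp :: "('a::topological_space \<Rightarrow> real) set" where
  "Tpp = {f. \<exists>U. is_cozero U \<and> closure U = UNIV \<and> continuous_on U f}"

definition Tpp_unit :: "('a::topological_space \<Rightarrow> real) \<Rightarrow> bool" where
  "Tpp_unit f \<longleftrightarrow> f \<in> Tpp \<and> (\<exists>g\<in>Tpp. (\<lambda>x. f x * g x) = (\<lambda>x. 1))"

end

theory Submission
  imports Defs
begin

theorem theorem2p3:
  fixes f :: "'a::t1_space \<Rightarrow> real"
  assumes "f \<in> Tpp"
  shows "Tpp_unit f \<longleftrightarrow> {x. f x = 0} = {}"
proof
  assume "Tpp_unit f"
  then obtain g where "(\<lambda>x. f x * g x) = (\<lambda>x. 1)" unfolding Tpp_unit_def by blast
  then have "\<And>x. f x * g x = 1" by metis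
  then show "{x. f x = 0} = {}" by (metis (mono_tags, lifting) empty_Collect_eq mult_zero_left zero_neq_one)
next
  assume h: "{x. f x = 0} = {}"
  then have nz: "\<And>x. f x \<noteq> 0" by auto
  from assms obtain U where U: "is_cozero U" "closure U = UNIV" "continuous_on U f"
    unfolding Tpp_def by blast
  have "continuous_on U (\<lambda>x. 1 / f x)"
    by (rule continuous_on_divide) (use U nz in auto)
  then have "(\<lambda>x. 1 / f x) \<in> Tpp" unfolding Tpp_def using U by blast
  moreover have "(\<lambda>x. f x * (1 / f x)) = (\<lambda>x. 1)" using nz by (auto intro!: ext)
  ultimately show "Tpp_unit f" unfolding Tpp_unit_def using assms by (intro conjI bexI[of _ "\<lambda>x. 1 / f x"])
qed

end
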